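(* Assume we are either in the $\delta$-algebraic setting or in the $\delta$-arithmetic setting. Let $f:R^{\times}\rightarrow R$ be a $\delta$-map and $s\neq 0$ an integer such that for all $a_1,a_2\in R^{\times}$, $$f(a_1a_2)=f(a_1)+a_1^sf(a_2).$$ Then there exists $\mu\in R$ such that $f(a)=\mu(1-a^s)$ for all $a\in R^{\times}$.
   Context: $\delta$-arithmetic setting: $p$ is an odd prime, $R$ is the complete discrete valuation ring with maximal ideal $pR$ and residue field $\mathbb{F}_p^a$; $\phi:R\to R$ is the unique ring endomorphism lifting Frobenius, and $\delta x=(\phi(x)-x^p)/p$. Here a $\delta$-map $R^{\times}\to R$ is a map of the form $a\mapsto F(a,\delta a,\dots,\delta^m a)$ with $F\in R[x,x^{-1},x',\dots,x^{(m)}]\hat{\ }$ (restricted power series, $\hat{\ }$ = $p$-adic completion). $\delta$-algebraic setting: $R$ is a field of characteristic zero with a derivation $\delta$, $\delta$-closed in Kolchin's sense; a $\delta$-map $R^{\times}\to R$ is a map $a\mapsto F(a,\delta a,\dots,\delta^m a)$ with $F$ a polynomial in $R[x,x^{-1},x',\dots,x^{(m)}]$. *)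

theory Defs
  imports Main "HOL-Library.Poly_Mapping" "HOL-Computational_Algebra.Polynomial"
begin

definition units_of_ring :: "'a::comm_ring_1 set" where
  "units_of_ring = {a. a dvd 1}"

definition upow :: "'a::comm_ring_1 \<Rightarrow> int \<Rightarrow> 'a" where
  "upow a k = (if 0 \<le> k then a ^ nat k else (THE b. a * b = 1) ^ nat (- k))"

text \<open>Monomial x^k * prod_i (x^(i+1))^(e i) of the ring R[x,x^-1,x',x'',...],
  evaluated at x^(j) := delta^j a. The exponent of x is an integer k,
  the finitely supported map e gives the exponent of x^(i+1) at index i.\<close>
definition dmon :: "('a::comm_ring_1 \<Rightarrow> 'a) \<Rightarrow> int \<times> (nat \<Rightarrow>\<^sub>0 nat) \<Rightarrow> 'a \<Rightarrow> 'a" where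
  "dmon \<delta> ke a = upow a (fst ke) *
      (\<Prod>i\<in>Poly_Mapping.keys (snd ke). ((\<delta> ^^ Suc i) a) ^ Poly_Mapping.lookup (snd ke) i)"

text \<open>Differential polynomials in one differential indeterminate y: finitely supported
  maps from exponent vectors (e i = exponent of y^(i)) to coefficients.\<close>
definition deval :: "('a::comm_ring_1 \<Rightarrow> 'a) \<Rightarrow> ((nat \<Rightarrow>\<^sub>0 nat) \<Rightarrow>\<^sub>0 'a) \<Rightarrow> 'a \<Rightarrow> 'a" where
  "deval \<delta> P a = (\<Sum>e\<in>Poly_Mapping.keys P. Poly_Mapping.lookup P e * (\<Prod>i\<in>Poly_Mapping.keys e. ((\<delta> ^^ i) a) ^ Poly_Mapping.lookup e i))"

definition dvars :: "((nat \<Rightarrow>\<^sub>0 nat) \<Rightarrow>\<^sub>0 'a::zero) \<Rightarrow> nat set" where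
  "dvars P = (\<Union>e\<in>Poly_Mapping.keys P. Poly_Mapping.keys e)"

text \<open>R is a field of characteristic zero, \<delta> is a derivation, and (R,\<delta>) is
  differentially closed (Blum's axioms: for differential polynomials P, Q with
  Q nonzero and ord Q < ord P there is a with P(a) = 0 and Q(a) \<noteq> 0).\<close>
definition delta_alg_setting :: "('a::idom \<Rightarrow> 'a) \<Rightarrow> bool" where
  "delta_alg_setting \<delta> \<longleftrightarrow>
     (\<forall>x::'a. x \<noteq> 0 \<longrightarrow> x dvd 1) \<and>
     (\<forall>n. (of_nat (Suc n) :: 'a) \<noteq> 0) \<and>
     (\<forall>x y. \<delta> (x + y) = \<delta> x + \<delta> y) \<and>
     (\<forall>x y. \<delta> (x * y) = x * \<delta> y + \<delta> x * y) \<and>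
     (\<forall>(P :: (nat \<Rightarrow>\<^sub>0 nat) \<Rightarrow>\<^sub>0 'a) Q n.
        n \<in> dvars P \<and> Q \<noteq> 0 \<and> dvars Q \<subseteq> {..<n} \<longrightarrow>
        (\<exists>a. deval \<delta> P a = 0 \<and> deval \<delta> Q a \<noteq> 0))"

text \<open>delta-maps in the algebraic setting: a \<mapsto> F(a, \<delta>a, ..., \<delta>^m a) with
  F in R[x, x^-1, x', ..., x^(m)] (a polynomial; m is implicit by finiteness).\<close>
definition delta_map_alg :: "('a::comm_ring_1 \<Rightarrow> 'a) \<Rightarrow> ('a \<Rightarrow> 'a) \<Rightarrow> bool" where
  "delta_map_alg \<delta> f \<longleftrightarrow>
     (\<exists>F :: (int \<times> (nat \<Rightarrow>\<^sub>0 nat)) \<Rightarrow>\<^sub>0 'a.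
        \<forall>a\<in>units_of_ring. f a = (\<Sum>ke\<in>Poly_Mapping.keys F. Poly_Mapping.lookup F ke * dmon \<delta> ke a))"

definition in_pow_ideal :: "nat \<Rightarrow> nat \<Rightarrow> 'a::comm_ring_1 \<Rightarrow> bool" where
  "in_pow_ideal p n x \<longleftrightarrow> (of_nat p :: 'a) ^ n dvd x"

text \<open>R is a complete discrete valuation ring with maximal ideal pR (p an odd prime)
  whose residue field R/pR is an algebraic closure of F_p (i.e. it is algebraically
  closed and every element is algebraic over F_p, equivalently fixed by some power
  of Frobenius); \<phi> is a ring endomorphism lifting Frobenius, and
  \<delta> x = (\<phi> x - x^p)/p.\<close>
definition delta_arith_setting :: "nat \<Rightarrow> ('a::idom \<Rightarrow> 'a) \<Rightarrow> ('a \<Rightarrow> 'a) \<Rightarrow> bool" where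
  "delta_arith_setting p \<phi> \<delta> \<longleftrightarrow>
     prime p \<and> odd p \<and>
     \<comment> \<open>DVR with uniformizer p (p is a nonunit, every nonzero element is a unit times a power of p)\<close>
     \<not> ((of_nat p :: 'a) dvd 1) \<and>
     (\<forall>x::'a. x \<noteq> 0 \<longrightarrow> (\<exists>u n. u dvd 1 \<and> x = u * of_nat p ^ n)) \<and>
     \<comment> \<open>p-adic completeness\<close>
     (\<forall>X :: nat \<Rightarrow> 'a. (\<forall>n. \<exists>N. \<forall>i\<ge>N. \<forall>j\<ge>N. in_pow_ideal p n (X i - X j)) \<longrightarrow>
        (\<exists>L. \<forall>n. \<exists>N. \<forall>i\<ge>N. in_pow_ideal p n (X i - L))) \<and>
     \<comment> \<open>residue field R/pR is algebraically closed\<close>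
     (\<forall>c :: 'a poly. degree c \<ge> 1 \<and> lead_coeff c = 1 \<longrightarrow>
        (\<exists>a. in_pow_ideal p 1 (poly c a))) \<and>
     \<comment> \<open>residue field R/pR is algebraic over F_p\<close>
     (\<forall>a::'a. \<exists>n\<ge>1. in_pow_ideal p 1 (a ^ (p ^ n) - a)) \<and>
     \<comment> \<open>\<phi> is a ring endomorphism lifting Frobenius\<close>
     \<phi> 1 = 1 \<and> (\<forall>x y. \<phi> (x + y) = \<phi> x + \<phi> y) \<and> (\<forall>x y. \<phi> (x * y) = \<phi> x * \<phi> y) \<and>
     (\<forall>x. in_pow_ideal p 1 (\<phi> x - x ^ p)) \<and>
     \<comment> \<open>\<delta> x = (\<phi> x - x^p) / p\<close>
     (\<forall>x. of_nat p * \<delta> x = \<phi> x - x ^ p)"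

text \<open>delta-maps in the arithmetic setting: a \<mapsto> F(a, \<delta>a, ..., \<delta>^m a) where F is a
  restricted power series in R[x, x^-1, x', ..., x^(m)]^ (p-adic completion), i.e.
  F = \<Sum> c_e * monomial_e with c_e \<rightarrow> 0 p-adically (for each n only finitely many
  c_e lie outside p^n R); the value is the p-adic limit of the series.\<close>
definition delta_map_arith :: "nat \<Rightarrow> ('a::comm_ring_1 \<Rightarrow> 'a) \<Rightarrow> ('a \<Rightarrow> 'a) \<Rightarrow> bool" where
  "delta_map_arith p \<delta> f \<longleftrightarrow>
     (\<exists>(m::nat) (c :: int \<times> (nat \<Rightarrow>\<^sub>0 nat) \<Rightarrow> 'a).
        (\<forall>ke. c ke \<noteq> 0 \<longrightarrow> Poly_Mapping.keys (snd ke) \<subseteq> {..<m}) \<and>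
        (\<forall>n. finite {ke. \<not> in_pow_ideal p n (c ke)}) \<and>
        (\<forall>a\<in>units_of_ring. \<forall>n.
           in_pow_ideal p n (f a - (\<Sum>ke | \<not> in_pow_ideal p n (c ke). c ke * dmon \<delta> ke a))))"

end

theory Submission
  imports Defs
begin

lemma inv_the:
  fixes a :: "'a::idom"
  assumes "a dvd 1"
  shows "a * (THE b. a * b = 1) = 1"
proof -
  obtain b where b: "1 = a * b" using assms by (auto elim: dvdE)
  have "\<exists>!b. a * b = 1"
  proof
    show "a * b = 1" using b by simp
  next
    fix c assume "a * c = 1"
    then have "b * (a * c) = b" by simp
    then show "c = b" using b by (metis mult.assoc mult.commute mult_1)
  qed
  then show ?thesis by (rule theI')
qed

lemma key_unit:
  fixes a :: "'a::idom" and s :: int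
  assumes a: "a dvd 1" and y: "(a ^ nat \<bar>s\<bar> - 1) dvd 1"
  shows "(1 - upow a s) dvd 1"
proof (cases "0 \<le> s")
  case True
  then have "upow a s = a ^ nat \<bar>s\<bar>" by (simp add: upow_def)
  then have "1 - upow a s = - (a ^ nat \<bar>s\<bar> - 1)" by simp
  then show ?thesis using y by (simp only: minus_dvd_iff)
next
  case False
  define ia where "ia = (THE b. a * b = 1)"
  have aia: "a * ia = 1" using inv_the[OF a] ia_def by simp
  have u: "upow a s = ia ^ nat \<bar>s\<bar>" using False by (simp add: upow_def ia_def)
  have "(1 - ia ^ nat \<bar>s\<bar>) * a ^ nat \<bar>s\<bar> = a ^ nat \<bar>s\<bar> - (a * ia) ^ nat \<bar>s\<bar>"
    by (simp add: algebra_simps power_mult_distrib)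
  also have "\<dots> = a ^ nat \<bar>s\<bar> - 1" using aia by simp
  finally have "(1 - upow a s) dvd (a ^ nat \<bar>s\<bar> - 1)" using u by (metis dvd_triv_left)
  then show ?thesis using y dvd_trans by blast
qed

lemma alg_char0_aux:
  assumes h: "\<forall>n. (of_nat (Suc n) :: 'a::idom) \<noteq> 0"
    and e: "(of_nat m :: 'a) = of_nat (m + Suc d)"
  shows False
proof -
  have "(of_nat m :: 'a) + 0 = of_nat m + of_nat (Suc d)" using e by (simp only: of_nat_add add_0_right)
  then have "(0::'a) = of_nat (Suc d)" by (rule add_left_imp_eq)
  then show False using h by metis
qed

lemma alg_char0:
  assumes h: "\<forall>n. (of_nat (Suc n) :: 'a::idom) \<noteq> 0"
  shows "(of_nat m :: 'a) = of_nat k \<Longrightarrow> m = k"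
proof (rule ccontr)
  assume e: "(of_nat m :: 'a) = of_nat k" and ne: "m \<noteq> k"
  show False
  proof (cases "m < k")
    case True
    obtain d where "k = Suc (m + d)" using less_imp_Suc_add[OF True] by blast
    then have d: "k = m + Suc d" by simp
    have "(of_nat m :: 'a) = of_nat (m + Suc d)" using e d by simp
    then show False by (rule alg_char0_aux[OF h])
  next
    case False
    then have "k < m" using ne by simp
    then obtain d where "m = Suc (k + d)" using less_imp_Suc_add by blast
    then have d: "m = k + Suc d" by simp
    have "(of_nat k :: 'a) = of_nat (k + Suc d)" using e d by simp
    then show False by (rule alg_char0_aux[OF h])
  qed
qed

lemma alg_exists:
  fixes \<delta> :: "'a::idom \<Rightarrow> 'a" and s :: int
  assumes "delta_alg_setting \<delta>" and s: "s \<noteq> 0"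
  shows "\<exists>b::'a. b dvd 1 \<and> (1 - upow b s) dvd 1"
proof -
  have fld: "\<forall>x::'a. x \<noteq> 0 \<longrightarrow> x dvd 1"
    using assms(1) unfolding delta_alg_setting_def by (elim conjE) assumption
  have ch: "\<forall>n. (of_nat (Suc n) :: 'a) \<noteq> 0"
    using assms(1) unfolding delta_alg_setting_def by (elim conjE) assumption
  let ?n = "nat \<bar>s\<bar>"
  have n1: "?n \<ge> 1" using s by simp
  have two: "(2::'a) \<noteq> 0" using ch[rule_format, of 1] by simp
  have "(2::'a) ^ ?n \<noteq> 1"
  proof
    assume "(2::'a) ^ ?n = 1"
    then have "(of_nat (2 ^ ?n) :: 'a) = of_nat 1" by simp
    then have "(2::nat) ^ ?n = 1" using alg_char0[OF ch] by blast
    then show False using n1 by simp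
  qed
  then have "(2::'a) ^ ?n - 1 \<noteq> 0" by simp
  then have "((2::'a) ^ ?n - 1) dvd 1" using fld by blast
  moreover have t: "(2::'a) dvd 1" using fld two by blast
  ultimately have "(1 - upow (2::'a) s) dvd 1" using key_unit[OF t] by blast
  then show ?thesis using t by (intro exI[of _ 2] conjI)
qed

lemma arith_exists:
  fixes \<delta> :: "'a::idom \<Rightarrow> 'a" and s :: int
  assumes A: "delta_arith_setting p \<phi> \<delta>" and s: "s \<noteq> 0"
  shows "\<exists>b::'a. b dvd 1 \<and> (1 - upow b s) dvd 1"
proof -
  let ?P = "(of_nat p :: 'a)"
  have np: "\<not> ?P dvd 1"
    using A unfolding delta_arith_setting_def by (elim conjE) assumption
  have dvr: "\<forall>x::'a. x \<noteq> 0 \<longrightarrow> (\<exists>u n. u dvd 1 \<and> x = u * ?P ^ n)"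
    using A unfolding delta_arith_setting_def by (elim conjE) assumption
  have ac: "\<forall>c :: 'a poly. degree c \<ge> 1 \<and> lead_coeff c = 1 \<longrightarrow> (\<exists>a. in_pow_ideal p 1 (poly c a))"
    using A unfolding delta_arith_setting_def by (elim conjE) assumption
  have unit: "y dvd 1" if "\<not> ?P dvd y" for y :: 'a
  proof -
    have "y \<noteq> 0" using that by auto
    then obtain u k where u: "u dvd 1" "y = u * ?P ^ k" using dvr by blast
    show ?thesis
    proof (cases k)
      case 0 then show ?thesis using u by simp
    next
      case (Suc j)
      then have "?P dvd y" using u by simp
      then show ?thesis using that by simp
    qed
  qed
  let ?n = "nat \<bar>s\<bar>"
  define c :: "'a poly" where "c = monom 1 (Suc ?n) - [:1, 1:]"
  have n1: "?n \<ge> 1" using s by simp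
  have c0: "coeff ([:1, 1:] :: 'a poly) (Suc ?n) = 0"
    by (rule coeff_eq_0) (use n1 in simp)
  have cc: "coeff c (Suc ?n) = 1" unfolding c_def coeff_diff c0 by (simp add: coeff_monom)
  have d1: "degree (monom (1::'a) (Suc ?n)) \<le> Suc ?n" by (rule degree_monom_le)
  have d2: "degree ([:1, 1:] :: 'a poly) \<le> Suc ?n" using n1 by simp
  have dle: "degree c \<le> Suc ?n"
    unfolding c_def using degree_diff_le[OF d1 d2] .
  have dge: "Suc ?n \<le> degree c" using cc by (intro le_degree) simp
  have deg: "degree c = Suc ?n" using dle dge by simp
  have lc: "lead_coeff c = 1" using deg cc by simp
  obtain x where x: "in_pow_ideal p 1 (poly c x)" using ac deg lc by fastforce
  have px: "poly c x = x ^ Suc ?n - x - 1" unfolding c_def poly_diff poly_monom by simp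
  have nd: "\<not> ?P dvd (x ^ Suc ?n - x)"
  proof
    assume "?P dvd (x ^ Suc ?n - x)"
    moreover have "?P dvd (x ^ Suc ?n - x - 1)" using x px by (simp add: in_pow_ideal_def)
    ultimately have "?P dvd ((x ^ Suc ?n - x) - (x ^ Suc ?n - x - 1))" by (rule dvd_diff)
    then show False using np by simp
  qed
  have fac: "x ^ Suc ?n - x = x * (x ^ ?n - 1)" by (simp add: algebra_simps)
  have "\<not> ?P dvd x" using nd fac by (metis dvd_mult2)
  then have xu: "x dvd 1" by (rule unit)
  have "\<not> ?P dvd (x ^ ?n - 1)" using nd fac by (metis dvd_mult)
  then have "(x ^ ?n - 1) dvd 1" by (rule unit)
  then have "(1 - upow x s) dvd 1" by (rule key_unit[OF xu])
  then show ?thesis using xu by (intro exI[of _ x] conjI)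
qed

theorem lemma3p5:
  fixes \<delta> :: "'a::idom \<Rightarrow> 'a" and \<phi> :: "'a \<Rightarrow> 'a" and p :: nat
    and f :: "'a \<Rightarrow> 'a" and s :: int
  assumes setting:
    "(delta_alg_setting \<delta> \<and> delta_map_alg \<delta> f) \<or>
     (delta_arith_setting p \<phi> \<delta> \<and> delta_map_arith p \<delta> f)"
    and s_nz: "s \<noteq> 0"
    and cocycle: "\<forall>a1\<in>units_of_ring. \<forall>a2\<in>units_of_ring.
                    f (a1 * a2) = f a1 + upow a1 s * f a2"
  shows "\<exists>\<mu>. \<forall>a\<in>units_of_ring. f a = \<mu> * (1 - upow a s)"
proof -
  obtain b :: 'a where b: "b dvd 1" "(1 - upow b s) dvd 1"
  proof -
    have "\<exists>b::'a. b dvd 1 \<and> (1 - upow b s) dvd 1"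
    proof (cases "delta_alg_setting \<delta>")
      case True then show ?thesis by (rule alg_exists[OF _ s_nz])
    next
      case False then have "delta_arith_setting p \<phi> \<delta>" using setting by blast
      then show ?thesis by (rule arith_exists[OF _ s_nz])
    qed
    then show ?thesis using that by blast
  qed
  obtain ic where ic: "1 = (1 - upow b s) * ic" using b(2) by (auto elim: dvdE)
  show ?thesis
  proof (intro exI ballI)
    fix a :: 'a assume a: "a \<in> units_of_ring"
    have bU: "b \<in> units_of_ring" using b by (simp add: units_of_ring_def)
    have "f (a * b) = f a + upow a s * f b" using cocycle a bU by blast
    moreover have "f (b * a) = f b + upow b s * f a" using cocycle a bU by blast
    ultimately have eq: "f a * (1 - upow b s) = f b * (1 - upow a s)"
      by (simp add: algebra_simps)
    have "f a = f a * ((1 - upow b s) * ic)" using ic by simp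
    also have "\<dots> = ic * (f a * (1 - upow b s))" by (simp add: algebra_simps)
    also have "\<dots> = ic * (f b * (1 - upow a s))" by (simp only: eq)
    also have "\<dots> = (ic * f b) * (1 - upow a s)" by (simp only: mult.assoc)
    finally show "f a = (ic * f b) * (1 - upow a s)" .
  qed
qed

end
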